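(* If $\mathcal{F}=\{f_i\}_{i=1}^k$ is a frame for $\mathcal{H}_n$, then there exists $y\in\mathcal{H}_n$ such that $\operatorname{rob}(\mathcal{F})=\operatorname{rob}(\{\langle f_i,y\rangle\}_{i=1}^k)$, where the sequence of scalars $\{\langle f_i,y\rangle\}_{i=1}^k$ is regarded as a frame for the one-dimensional space of scalars (so its maximum robustness equals one less than the number of nonzero entries).
   Context: $\mathcal{H}_n$ is an $n$-dimensional real or complex Hilbert space. A finite sequence of vectors in a finite-dimensional Hilbert space is a frame for it iff it spans it. A frame $\{f_i\}_{i=1}^k$ is robust to $r$ erasures if for every index set $I\subseteq\{1,\dots,k\}$ with $|I|=r$, the sequence $\{f_i\}_{i\notin I}$ still spans the space. The maximum robustness $\operatorname{rob}(\mathcal{F})$ is the largest $r$ such that $\mathcal{F}$ is robust to $r$ erasures. *)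

theory Defs
  imports "HOL-Analysis.Analysis"
begin

text \<open>Frames and erasure robustness, generic in the span operator of the ambient
  finite-dimensional space. Frame vectors are indexed by 1..k.\<close>

definition is_frame :: "('v set \<Rightarrow> 'v set) \<Rightarrow> (nat \<Rightarrow> 'v) \<Rightarrow> nat \<Rightarrow> bool" where
  "is_frame sp f k \<longleftrightarrow> sp (f ` {1..k}) = UNIV"

definition robust_to :: "('v set \<Rightarrow> 'v set) \<Rightarrow> (nat \<Rightarrow> 'v) \<Rightarrow> nat \<Rightarrow> nat \<Rightarrow> bool" where
  "robust_to sp f k r \<longleftrightarrow>
     (\<forall>I. I \<subseteq> {1..k} \<longrightarrow> card I = r \<longrightarrow> sp (f ` ({1..k} - I)) = UNIV)"

definition max_rob :: "('v set \<Rightarrow> 'v set) \<Rightarrow> (nat \<Rightarrow> 'v) \<Rightarrow> nat \<Rightarrow> nat" where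
  "max_rob sp f k = Max {r. r \<le> k \<and> robust_to sp f k r}"

definition cinner :: "complex ^ 'n \<Rightarrow> complex ^ 'n \<Rightarrow> complex" where
  "cinner x y = (\<Sum>j\<in>UNIV. x $ j * cnj (y $ j))"

end

theory Submission
  imports Defs
begin

lemma sc_span:
  "vector_space_over_itself.span T = (UNIV::'c::field set) \<longleftrightarrow> (\<exists>t\<in>T. t \<noteq> 0)"
proof
  assume h: "vector_space_over_itself.span T = (UNIV::'c set)"
  show "\<exists>t\<in>T. t \<noteq> 0"
  proof (rule ccontr)
    assume "\<not> (\<exists>t\<in>T. t \<noteq> 0)"
    then have "T \<subseteq> {0}" by auto
    then have "vector_space_over_itself.span T \<subseteq> vector_space_over_itself.span {0::'c}"
      by (rule vector_space_over_itself.span_mono)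
    also have "\<dots> = {0}" by simp
    finally have "(1::'c) \<in> {0}" using h by blast
    then show False by simp
  qed
next
  assume "\<exists>t\<in>T. t \<noteq> 0"
  then obtain t where t: "t \<in> T" "t \<noteq> 0" by auto
  have "x \<in> vector_space_over_itself.span T" for x :: 'c
  proof -
    have "(x / t) * t \<in> vector_space_over_itself.span T"
      by (intro vector_space_over_itself.span_scale vector_space_over_itself.span_base t)
    then show ?thesis using t by simp
  qed
  then show "vector_space_over_itself.span T = UNIV" by auto
qed

lemma robust_sc:
  "robust_to vector_space_over_itself.span (c :: nat \<Rightarrow> 'c::field) k s \<longleftrightarrow>
   (\<forall>I. I \<subseteq> {1..k} \<longrightarrow> card I = s \<longrightarrow> (\<exists>i\<in>{1..k} - I. c i \<noteq> 0))"
  unfolding robust_to_def sc_span by auto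

lemma ext_subset:
  assumes "finite B" "A \<subseteq> B" "card A \<le> s" "s \<le> card B"
  obtains J where "A \<subseteq> J" "J \<subseteq> B" "card J = s"
proof -
  have fA: "finite A" using assms finite_subset by blast
  have "s - card A \<le> card (B - A)" using assms fA by (simp add: card_Diff_subset)
  then obtain K where K: "K \<subseteq> B - A" "card K = s - card A" "finite K"
    by (rule obtain_subset_with_card_n)
  have "card (A \<union> K) = card A + card K"
    using K fA by (subst card_Un_disjoint) auto
  then show ?thesis using that[of "A \<union> K"] K assms by auto
qed

lemma comb:
  fixes sp :: "'v set \<Rightarrow> 'v set" and g :: "'v \<Rightarrow> 'w::zero \<Rightarrow> 'c::field"
  assumes A1: "\<And>S. sp S \<noteq> UNIV \<Longrightarrow> \<exists>y. y \<noteq> 0 \<and> (\<forall>s\<in>S. g s y = 0)"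
    and A2: "\<And>S y. sp S = UNIV \<Longrightarrow> y \<noteq> 0 \<Longrightarrow> \<exists>s\<in>S. g s y \<noteq> 0"
    and A3: "sp {} \<noteq> UNIV"
    and fr: "is_frame sp f k"
  shows "\<exists>y. is_frame vector_space_over_itself.span (\<lambda>i. g (f i) y) k \<and>
           max_rob sp f k = max_rob vector_space_over_itself.span (\<lambda>i. g (f i) y) k"
proof -
  define R where "R = {r. r \<le> k \<and> robust_to sp f k r}"
  define r where "r = max_rob sp f k"
  have finR: "finite R" unfolding R_def by auto
  have "robust_to sp f k 0"
    unfolding robust_to_def using fr unfolding is_frame_def
    by (metis Diff_empty card_0_eq finite_atLeastAtMost finite_subset)
  then have "0 \<in> R" unfolding R_def by auto
  then have "R \<noteq> {}" by auto
  have rR: "r \<in> R" unfolding r_def max_rob_def R_def[symmetric]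
    using Max_in[OF finR \<open>R \<noteq> {}\<close>] .
  have rmax: "\<And>s. s \<in> R \<Longrightarrow> s \<le> r"
    using finR unfolding r_def max_rob_def R_def[symmetric] by auto
  have rob_r: "robust_to sp f k r" and rk: "r \<le> k" using rR unfolding R_def by auto
  have "r \<noteq> k"
  proof
    assume "r = k"
    then have "sp (f ` ({1..k} - {1..k})) = UNIV"
      using rob_r unfolding robust_to_def by auto
    then show False using A3 by simp
  qed
  with rk have rk': "r < k" by simp
  have "\<not> robust_to sp f k (r+1)"
    using rmax[of "r+1"] rk' unfolding R_def by auto
  then obtain I where I: "I \<subseteq> {1..k}" "card I = r+1" "sp (f ` ({1..k} - I)) \<noteq> UNIV"
    unfolding robust_to_def by auto
  from A1[OF I(3)] obtain y where y: "y \<noteq> 0" "\<And>i. i \<in> {1..k} - I \<Longrightarrow> g (f i) y = 0"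
    by blast
  define N where "N = {i\<in>{1..k}. g (f i) y \<noteq> 0}"
  have NI: "N \<subseteq> I" using y(2) unfolding N_def by auto
  have finI: "finite I" using I(1) finite_subset by blast
  have "\<not> card N \<le> r"
  proof
    assume "card N \<le> r"
    moreover have "N \<subseteq> {1..k}" unfolding N_def by auto
    ultimately obtain J where J: "N \<subseteq> J" "J \<subseteq> {1..k}" "card J = r"
      using ext_subset[of "{1..k}" N r] rk by auto
    then have "sp (f ` ({1..k} - J)) = UNIV" using rob_r unfolding robust_to_def by auto
    from A2[OF this y(1)] obtain i where "i \<in> {1..k} - J" "g (f i) y \<noteq> 0" by auto
    then show False using J unfolding N_def by auto
  qed
  moreover have "card N \<le> card I" using NI finI by (rule card_mono[rotated])
  ultimately have "card N = card I" using I(2) by simp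
  then have NeI: "N = I" using NI finI by (simp add: card_subset_eq)
  let ?c = "\<lambda>i. g (f i) y"
  have Ic: "\<And>i. i \<in> {1..k} \<Longrightarrow> ?c i \<noteq> 0 \<longleftrightarrow> i \<in> I"
    using NeI unfolding N_def by auto
  have "I \<noteq> {}" using I(2) by auto
  then obtain i0 where "i0 \<in> I" by auto
  then have frc: "is_frame vector_space_over_itself.span ?c k"
    unfolding is_frame_def sc_span using Ic I(1) by auto
  have "{s. s \<le> k \<and> robust_to vector_space_over_itself.span ?c k s} = {..r}"
  proof (intro set_eqI iffI)
    fix s assume "s \<in> {s. s \<le> k \<and> robust_to vector_space_over_itself.span ?c k s}"
    then have s: "s \<le> k" "robust_to vector_space_over_itself.span ?c k s" by auto
    show "s \<in> {..r}"
    proof (rule ccontr)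
      assume "s \<notin> {..r}"
      then have "card I \<le> s" using I(2) by auto
      then obtain J where J: "I \<subseteq> J" "J \<subseteq> {1..k}" "card J = s"
        using ext_subset[of "{1..k}" I s] s(1) I(1) by auto
      then obtain i where "i \<in> {1..k} - J" "?c i \<noteq> 0"
        using s(2) unfolding robust_sc by blast
      then show False using Ic J by auto
    qed
  next
    fix s assume "s \<in> {..r}"
    then have s: "s \<le> r" by auto
    have "robust_to vector_space_over_itself.span ?c k s"
      unfolding robust_sc
    proof (intro allI impI)
      fix J assume J: "J \<subseteq> {1..k}" "card J = s"
      have "\<not> I \<subseteq> J"
      proof
        assume "I \<subseteq> J"
        then have "card I \<le> card J" using J(1) finite_subset by (intro card_mono) auto
        then show False using I(2) J(2) s by simp
      qed
      then obtain i where "i \<in> I" "i \<notin> J" by auto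
      then show "\<exists>i\<in>{1..k} - J. ?c i \<noteq> 0" using Ic I(1) by auto
    qed
    then show "s \<in> {s. s \<le> k \<and> robust_to vector_space_over_itself.span ?c k s}"
      using s rk by auto
  qed
  then have "max_rob vector_space_over_itself.span ?c k = r"
    unfolding max_rob_def by (simp, intro Max_eqI) auto
  then show ?thesis using frc unfolding r_def by auto
qed

lemma real_A1:
  fixes S :: "(real^'n) set"
  assumes "vec.span S \<noteq> UNIV"
  shows "\<exists>y. y \<noteq> 0 \<and> (\<forall>s\<in>S. s \<bullet> y = 0)"
proof -
  from span_not_UNIV_orthogonal[of S] assms obtain a where
    "a \<noteq> 0" "\<forall>x\<in>span S. a \<bullet> x = 0" by (auto simp: span_vec_eq)
  then show ?thesis by (metis inner_commute span_base)
qed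

lemma real_A2:
  fixes S :: "(real^'n) set"
  assumes "vec.span S = UNIV" "y \<noteq> 0"
  shows "\<exists>s\<in>S. s \<bullet> y \<noteq> 0"
proof (rule ccontr)
  assume "\<not> ?thesis"
  then have "\<And>s. s \<in> S \<Longrightarrow> orthogonal y s" by (simp add: orthogonal_def inner_commute)
  moreover have "y \<in> span S" using assms by (simp add: span_vec_eq)
  ultimately have "orthogonal y y" by (rule orthogonal_to_span[rotated])
  then show False using assms by (simp add: orthogonal_def)
qed

lemma real_A3: "vec.span {} \<noteq> (UNIV :: (real^'n) set)"
proof -
  have "(vec 1 :: real^'n) \<noteq> 0" by (simp add: vec_eq_iff)
  then show ?thesis by auto
qed

lemma real_part:
  fixes f :: "nat \<Rightarrow> real ^ 'n"
  assumes "is_frame vec.span f k"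
  shows "\<exists>y. is_frame vector_space_over_itself.span (\<lambda>i. f i \<bullet> y) k \<and>
                 max_rob vec.span f k = max_rob vector_space_over_itself.span (\<lambda>i. f i \<bullet> y) k"
  using comb[where g = "\<lambda>v y. v \<bullet> y", OF real_A1 real_A2 real_A3 assms] by simp

lemma cinner_span0:
  fixes S :: "(complex^'m) set"
  assumes "\<forall>s\<in>S. cinner s y = 0" "x \<in> vec.span S"
  shows "cinner x y = 0"
proof -
  have "vec.subspace {x. cinner x y = 0}"
    unfolding vec.subspace_def cinner_def
    by (auto simp: sum.distrib distrib_right mult.assoc simp flip: sum_distrib_left)
  then show ?thesis using vec.span_induct[OF assms(2)] assms(1) by auto
qed

lemma complex_A2:
  fixes S :: "(complex^'m) set"
  assumes "vec.span S = UNIV" "y \<noteq> 0"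
  shows "\<exists>s\<in>S. cinner s y \<noteq> 0"
proof (rule ccontr)
  assume "\<not> ?thesis"
  then have "cinner y y = 0" using cinner_span0[of S y y] assms by auto
  then have "(\<Sum>j\<in>UNIV. complex_of_real ((Re (y$j))\<^sup>2 + (Im (y$j))\<^sup>2)) = 0"
    unfolding cinner_def by (simp add: complex_mult_cnj)
  then have "complex_of_real (\<Sum>j\<in>UNIV. (Re (y$j))\<^sup>2 + (Im (y$j))\<^sup>2) = 0"
    by (simp only: of_real_sum)
  then have "(\<Sum>j\<in>UNIV. (Re (y$j))\<^sup>2 + (Im (y$j))\<^sup>2) = 0" by (simp only: of_real_eq_0_iff)
  then have "\<forall>j\<in>UNIV. (Re (y$j))\<^sup>2 + (Im (y$j))\<^sup>2 = 0"
    by (subst (asm) sum_nonneg_eq_0_iff) auto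
  then have "y = 0" by (simp add: vec_eq_iff complex_eq_iff)
  then show False using assms by simp
qed

lemma complex_A3: "vec.span {} \<noteq> (UNIV :: (complex^'m) set)"
proof -
  have "(vec 1 :: complex^'m) \<noteq> 0" by (simp add: vec_eq_iff)
  then show ?thesis by auto
qed

lemma complex_A1:
  fixes S :: "(complex^'m) set"
  assumes "vec.span S \<noteq> UNIV"
  shows "\<exists>y. y \<noteq> 0 \<and> (\<forall>s\<in>S. cinner s y = 0)"
proof -
  interpret p: vector_space_pair "(*s) :: complex \<Rightarrow> complex^'m \<Rightarrow> complex^'m"
    "(*) :: complex \<Rightarrow> complex \<Rightarrow> complex" by unfold_locales
  obtain x where x: "x \<notin> vec.span S" using assms by auto
  obtain B where B: "B \<subseteq> vec.span S" "vec.independent B" "vec.span S \<subseteq> vec.span B"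
    by (rule vec.basis_exists)
  have "vec.span B \<subseteq> vec.span S" using vec.span_mono[OF B(1)] by (simp only: vec.span_span)
  then have xB: "x \<notin> vec.span B" using x by auto
  have ind: "vec.independent (insert x B)" using vec.independent_insertI[OF xB B(2)] .
  define L where "L = p.construct (insert x B) (\<lambda>b. if b = x then 1 else 0)"
  have lin: "Vector_Spaces.linear (*s) (*) L" unfolding L_def by (rule p.linear_construct[OF ind])
  have Lx: "L x = 1" unfolding L_def using p.construct_basis[OF ind, of x] by simp
  have LB: "L b = 0" if "b \<in> B" for b
  proof -
    have "b \<noteq> x" using that xB vec.span_base by blast
    then show ?thesis unfolding L_def using p.construct_basis[OF ind, of b] that by simp
  qed
  interpret h: module_hom "(*s) :: complex \<Rightarrow> complex^'m \<Rightarrow> _" "(*)" L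
    using lin module_hom_iff_linear by auto
  have LS: "L s = 0" if "s \<in> S" for s
    using h.eq_0_on_span[OF LB] B(3) vec.span_base[OF that] by auto
  define y where "y = (\<chi> j. cnj (L (axis j 1)))"
  have cy: "cinner v y = L v" for v
  proof -
    have "L v = L (\<Sum>i\<in>UNIV. v$i *s axis i 1)" by (simp add: basis_expansion)
    also have "\<dots> = (\<Sum>i\<in>UNIV. v$i * L (axis i 1))" by (simp add: h.sum h.scale)
    finally show ?thesis unfolding cinner_def y_def by simp
  qed
  have "y \<noteq> 0" using cy[of x] Lx unfolding cinner_def by auto
  then show ?thesis using cy LS by auto
qed

lemma complex_part:
  fixes f :: "nat \<Rightarrow> complex ^ 'm"
  assumes "is_frame vec.span f k"
  shows "\<exists>y. is_frame vector_space_over_itself.span (\<lambda>i. cinner (f i) y) k \<and>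
                 max_rob vec.span f k = max_rob vector_space_over_itself.span (\<lambda>i. cinner (f i) y) k"
  using comb[where g = cinner, OF complex_A1 complex_A2 complex_A3 assms] by simp

theorem theorem2p3:
  shows "(\<forall>(f :: nat \<Rightarrow> real ^ 'n) k. is_frame vec.span f k \<longrightarrow>
            (\<exists>y. is_frame vector_space_over_itself.span (\<lambda>i. f i \<bullet> y) k \<and>
                 max_rob vec.span f k = max_rob vector_space_over_itself.span (\<lambda>i. f i \<bullet> y) k))
       \<and> (\<forall>(f :: nat \<Rightarrow> complex ^ 'm) k. is_frame vec.span f k \<longrightarrow>
            (\<exists>y. is_frame vector_space_over_itself.span (\<lambda>i. cinner (f i) y) k \<and>
                 max_rob vec.span f k = max_rob vector_space_over_itself.span (\<lambda>i. cinner (f i) y) k))"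
  using real_part complex_part by blast

end
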